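(* Let $X$ be an infinite-dimensional real normed space. Then there exists an approximately convex set $A\subseteq X$ such that $\mathcal{H}(A,\operatorname{Co}(A))=\infty$.
   Context: A set $A\subseteq X$ is approximately convex if $d(tx+(1-t)y,A)\le 1$ for all $x,y\in A$ and $t\in[0,1]$, where $d(x,A)=\inf_{a\in A}\|x-a\|$. $\mathcal{H}(A,B)=\sup\{d(x,B),d(y,A):x\in A,y\in B\}$ is the Hausdorff distance and $\operatorname{Co}(A)$ the convex hull. *)

theory Defs
  imports "HOL-Analysis.Analysis"
begin

definition approx_convex :: "'a::real_normed_vector set \<Rightarrow> bool" where
  "approx_convex A \<longleftrightarrow>
     (\<forall>x\<in>A. \<forall>y\<in>A. \<forall>t::real. 0 \<le> t \<and> t \<le> 1 \<longrightarrow> infdist (t *\<^sub>R x + (1 - t) *\<^sub>R y) A \<le> 1)"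

definition hausdorff_ext :: "'a::metric_space set \<Rightarrow> 'a set \<Rightarrow> ereal" where
  "hausdorff_ext A B =
     sup (SUP x\<in>A. ereal (infdist x B)) (SUP y\<in>B. ereal (infdist y A))"

definition infinite_dimensional :: "'a::real_vector itself \<Rightarrow> bool" where
  "infinite_dimensional _ \<longleftrightarrow> (\<forall>B::'a set. finite B \<longrightarrow> span B \<noteq> UNIV)"

end

theory Submission
  imports Defs
begin

lemma infdist_ge_all:
  assumes "A \<noteq> {}" "\<And>a. a \<in> A \<Longrightarrow> d \<le> dist x a"
  shows "d \<le> infdist x A"
  unfolding infdist_def using assms by (auto intro: cINF_greatest)

lemma infdist_span_pos:
  fixes x :: "'a::real_normed_vector"
  assumes "finite S" "x \<notin> span S"
  shows "0 < infdist x (span S)"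
  using assms
proof (induction S arbitrary: x rule: finite_induct)
  case empty
  then have "x \<noteq> 0" using span_zero by blast
  then show ?case by (simp add: infdist_singleton)
next
  case (insert a S)
  show ?case
  proof (cases "a \<in> span S")
    case True then show ?thesis using insert by (simp add: span_redundant)
  next
    case False
    define q where "q = infdist a (span S)"
    have q: "q > 0" using insert.IH False q_def by auto
    have key: "\<bar>t\<bar> * q \<le> norm (u + t *\<^sub>R a)" if "u \<in> span S" for u t
    proof (cases "t = 0")
      case True then show ?thesis by simp
    next
      case False
      have "q \<le> dist a (-(1/t) *\<^sub>R u)" unfolding q_def
        by (rule infdist_le) (simp add: span_scale span_neg that)
      also have "dist a (-(1/t) *\<^sub>R u) = norm ((1/t) *\<^sub>R (u + t *\<^sub>R a))"
        using False by (simp add: dist_norm algebra_simps)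
      also have "\<dots> = norm (u + t *\<^sub>R a) / \<bar>t\<bar>" by simp
      finally show ?thesis using False by (simp add: field_simps)
    qed
    have x0: "x \<noteq> 0" using insert.prems span_zero by blast
    define T where "T = 2 * norm x / q"
    have T0: "0 \<le> T" using q by (simp add: T_def)
    define F where "F = (\<lambda>t. infdist (x - t *\<^sub>R a) (span S))"
    have Fpos: "F t > 0" for t
      unfolding F_def
    proof (rule insert.IH)
      show "x - t *\<^sub>R a \<notin> span S"
      proof
        assume "x - t *\<^sub>R a \<in> span S"
        then have "x \<in> span (insert a S)" by (auto simp: span_insert)
        then show False using insert.prems by blast
      qed
    qed
    have "continuous_on {-T..T} F" unfolding F_def
      by (intro continuous_intros)
    then obtain t0 where t0: "t0 \<in> {-T..T}" "\<forall>t\<in>{-T..T}. F t0 \<le> F t"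
      using continuous_attains_inf[of "{-T..T}" F] T0 by auto
    define \<delta> where "\<delta> = min (norm x) (F t0)"
    have dpos: "\<delta> > 0" using x0 Fpos \<delta>_def by auto
    have "\<delta> \<le> dist x w" if wS: "w \<in> span (insert a S)" for w
    proof -
      obtain t where u: "w - t *\<^sub>R a \<in> span S" using wS span_insert[of a S] by blast
      show ?thesis
      proof (cases "\<bar>t\<bar> \<le> T")
        case True
        have "F t0 \<le> F t" using t0(2) True by (simp add: abs_le_iff)
        also have "F t \<le> dist (x - t *\<^sub>R a) (w - t *\<^sub>R a)" unfolding F_def
          by (rule infdist_le[OF u])
        also have "\<dots> = dist x w" by (simp add: dist_norm algebra_simps)
        finally show ?thesis unfolding \<delta>_def by simp
      next
        case False
        have "\<bar>t\<bar> * q > T * q" using False q by simp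
        then have "\<bar>t\<bar> * q > 2 * norm x" using q by (simp add: T_def)
        moreover have "\<bar>t\<bar> * q \<le> norm w" using key[OF u, of t] by simp
        moreover have "norm w \<le> norm x + dist x w"
          by (metis dist_commute dist_norm norm_triangle_sub)
        ultimately show ?thesis unfolding \<delta>_def by linarith
      qed
    qed
    then have "\<delta> \<le> infdist x (span (insert a S))"
      by (intro infdist_ge_all) (use span_zero in blast)+
    then show ?thesis using dpos by linarith
  qed
qed

definition good :: "'a::real_normed_vector set \<Rightarrow> ('a \<Rightarrow> real) \<Rightarrow> bool" where
  "good V \<phi> \<longleftrightarrow> (\<forall>u\<in>V. \<forall>w\<in>V. \<phi> (u + w) = \<phi> u + \<phi> w) \<and> (\<forall>r. \<forall>u\<in>V. \<phi> (r *\<^sub>R u) = r * \<phi> u)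
     \<and> (\<forall>u\<in>V. \<phi> u \<le> norm u)"

definition coef :: "'a::real_vector set \<Rightarrow> 'a \<Rightarrow> 'a \<Rightarrow> real" where
  "coef S x w = (THE t. w - t *\<^sub>R x \<in> span S)"

definition extf :: "('a::real_vector \<Rightarrow> real) \<Rightarrow> 'a set \<Rightarrow> 'a \<Rightarrow> real \<Rightarrow> 'a \<Rightarrow> real" where
  "extf \<phi> S x c w = \<phi> (w - coef S x w *\<^sub>R x) + coef S x w * c"

lemma coef_eq:
  assumes "x \<notin> span S" "u \<in> span S"
  shows "coef S x (u + t *\<^sub>R x) = t"
  unfolding coef_def
proof (rule the_equality)
  show "u + t *\<^sub>R x - t *\<^sub>R x \<in> span S" using assms by simp
next
  fix t' assume "u + t *\<^sub>R x - t' *\<^sub>R x \<in> span S"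
  then have "u + t *\<^sub>R x - t' *\<^sub>R x - u \<in> span S" using assms(2) span_diff by blast
  then have "(t - t') *\<^sub>R x \<in> span S" by (simp add: algebra_simps)
  then show "t' = t"
  proof (cases "t = t'")
    case False
    assume h: "(t - t') *\<^sub>R x \<in> span S"
    have "(1/(t - t')) *\<^sub>R ((t - t') *\<^sub>R x) \<in> span S" using h span_scale by blast
    then have "x \<in> span S" using False by simp
    then show ?thesis using assms by blast
  qed simp
qed

lemma extf_eq:
  assumes "x \<notin> span S" "u \<in> span S"
  shows "extf \<phi> S x c (u + t *\<^sub>R x) = \<phi> u + t * c"
  unfolding extf_def coef_eq[OF assms] by simp

lemma span_insert_decomp:
  assumes "w \<in> span (insert x S)"
  obtains u t where "u \<in> span S" "w = u + t *\<^sub>R x"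
proof -
  obtain t where "w - t *\<^sub>R x \<in> span S" using assms span_insert[of x S] by blast
  then show ?thesis using that[of "w - t *\<^sub>R x" t] by simp
qed

lemma good_abs:
  assumes "good (span S) \<phi>" "u \<in> span S"
  shows "\<bar>\<phi> u\<bar> \<le> norm u"
proof -
  have "\<phi> u \<le> norm u" using assms unfolding good_def by blast
  moreover have "\<phi> ((-1) *\<^sub>R u) \<le> norm ((-1) *\<^sub>R u)" using assms span_scale unfolding good_def by blast
  moreover have "\<phi> ((-1) *\<^sub>R u) = (-1) * \<phi> u" using assms unfolding good_def by blast
  ultimately show ?thesis by simp
qed

lemma good_extf:
  assumes g: "good (span S) \<phi>" and x: "x \<notin> span S"
    and b: "\<And>u t. u \<in> span S \<Longrightarrow> \<phi> u + t * c \<le> norm (u + t *\<^sub>R x)"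
  shows "good (span (insert x S)) (extf \<phi> S x c)"
  unfolding good_def
proof (intro conjI ballI allI)
  fix w1 w2 assume w1: "w1 \<in> span (insert x S)" and w2: "w2 \<in> span (insert x S)"
  obtain u1 t1 where u1: "u1 \<in> span S" "w1 = u1 + t1 *\<^sub>R x" using span_insert_decomp[OF w1] by blast
  obtain u2 t2 where u2: "u2 \<in> span S" "w2 = u2 + t2 *\<^sub>R x" using span_insert_decomp[OF w2] by blast
  have "w1 + w2 = (u1 + u2) + (t1 + t2) *\<^sub>R x" using u1 u2 by (simp add: algebra_simps)
  moreover have "u1 + u2 \<in> span S" using u1 u2 span_add by blast
  moreover have "\<phi> (u1 + u2) = \<phi> u1 + \<phi> u2" using g u1 u2 unfolding good_def by blast
  ultimately have "extf \<phi> S x c (w1 + w2) = \<phi> u1 + \<phi> u2 + (t1 + t2) * c"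
    using extf_eq[OF x] by metis
  moreover have "extf \<phi> S x c w1 = \<phi> u1 + t1 * c" using u1 extf_eq[OF x] by metis
  moreover have "extf \<phi> S x c w2 = \<phi> u2 + t2 * c" using u2 extf_eq[OF x] by metis
  ultimately show "extf \<phi> S x c (w1 + w2) = extf \<phi> S x c w1 + extf \<phi> S x c w2"
    by (simp add: algebra_simps)
next
  fix r w1 assume w1: "w1 \<in> span (insert x S)"
  obtain u1 t1 where u1: "u1 \<in> span S" "w1 = u1 + t1 *\<^sub>R x" using span_insert_decomp[OF w1] by blast
  have "r *\<^sub>R w1 = r *\<^sub>R u1 + (r * t1) *\<^sub>R x" using u1 by (simp add: algebra_simps)
  moreover have "r *\<^sub>R u1 \<in> span S" using u1 span_scale by blast
  moreover have "\<phi> (r *\<^sub>R u1) = r * \<phi> u1" using g u1 unfolding good_def by blast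
  ultimately have "extf \<phi> S x c (r *\<^sub>R w1) = r * \<phi> u1 + (r * t1) * c"
    using extf_eq[OF x] by metis
  moreover have "extf \<phi> S x c w1 = \<phi> u1 + t1 * c" using u1 extf_eq[OF x] by metis
  ultimately show "extf \<phi> S x c (r *\<^sub>R w1) = r * extf \<phi> S x c w1"
    by (simp add: algebra_simps)
next
  fix w1 assume w1: "w1 \<in> span (insert x S)"
  obtain u1 t1 where u1: "u1 \<in> span S" "w1 = u1 + t1 *\<^sub>R x" using span_insert_decomp[OF w1] by blast
  show "extf \<phi> S x c w1 \<le> norm w1" using u1 extf_eq[OF x] b by simp
qed

lemma HB_step:
  assumes g: "good (span S) \<phi>"
  shows "\<exists>c. \<forall>u\<in>span S. \<forall>t. \<phi> u + t * c \<le> norm (u + t *\<^sub>R y)"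
proof -
  have lin: "\<phi> (u + w) = \<phi> u + \<phi> w" if "u \<in> span S" "w \<in> span S" for u w
    using g that unfolding good_def by blast
  have hom: "\<phi> (r *\<^sub>R u) = r * \<phi> u" if "u \<in> span S" for r u
    using g that unfolding good_def by blast
  have bd: "\<phi> u \<le> norm u" if "u \<in> span S" for u
    using g that unfolding good_def by blast
  have key: "\<phi> u - norm (u - y) \<le> norm (u' + y) - \<phi> u'" if "u \<in> span S" "u' \<in> span S" for u u'
  proof -
    have "\<phi> u + \<phi> u' = \<phi> (u + u')" using lin that by simp
    also have "\<dots> \<le> norm (u + u')" using bd that span_add by blast
    also have "\<dots> \<le> norm (u - y) + norm (u' + y)"
      using norm_triangle_ineq[of "u - y" "u' + y"] by simp
    finally show ?thesis by simp
  qed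
  define L where "L = (\<lambda>u. \<phi> u - norm (u - y)) ` span S"
  define c where "c = Sup L"
  have Lne: "L \<noteq> {}" unfolding L_def using span_zero by blast
  have Lbdd: "bdd_above L" unfolding L_def bdd_above_def
    using key[of _ 0] span_zero by blast
  have c_up: "\<phi> u - norm (u - y) \<le> c" if "u \<in> span S" for u
    unfolding c_def using Lbdd that L_def by (auto intro: cSup_upper)
  have c_lo: "c \<le> norm (u' + y) - \<phi> u'" if "u' \<in> span S" for u'
    unfolding c_def using Lne that key L_def by (auto intro!: cSup_least)
  show ?thesis
  proof (intro exI ballI allI)
    fix u and t :: real assume u: "u \<in> span S"
    consider "t = 0" | "t > 0" | "t < 0" by (metis linorder_neqE_linordered_idom)
    then show "\<phi> u + t * c \<le> norm (u + t *\<^sub>R y)"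
    proof cases
      case 1 then show ?thesis using bd u by simp
    next
      case 2
      have u': "(1/t) *\<^sub>R u \<in> span S" using u span_scale by blast
      have "c \<le> norm ((1/t) *\<^sub>R u + y) - \<phi> ((1/t) *\<^sub>R u)" using c_lo[OF u'] .
      also have "norm ((1/t) *\<^sub>R u + y) = norm ((1/t) *\<^sub>R (u + t *\<^sub>R y))"
        using 2 by (simp add: algebra_simps)
      also have "\<dots> = norm (u + t *\<^sub>R y) / t" using 2 by simp
      also have "\<phi> ((1/t) *\<^sub>R u) = \<phi> u / t" using hom[OF u] by simp
      finally have "c \<le> (norm (u + t *\<^sub>R y) - \<phi> u) / t" by (simp add: diff_divide_distrib)
      then show ?thesis using 2 by (simp add: field_simps)
    next
      case 3
      define s where "s = - t"
      have s: "s > 0" using 3 s_def by simp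
      have u': "(1/s) *\<^sub>R u \<in> span S" using u span_scale by blast
      have "\<phi> ((1/s) *\<^sub>R u) - norm ((1/s) *\<^sub>R u - y) \<le> c" using c_up[OF u'] .
      moreover have "norm ((1/s) *\<^sub>R u - y) = norm ((1/s) *\<^sub>R (u + t *\<^sub>R y))"
      proof -
        have "(1/s) *\<^sub>R (u + t *\<^sub>R y) = (1/s) *\<^sub>R u + ((1/s) * t) *\<^sub>R y"
          by (simp add: scaleR_add_right)
        also have "(1/s) * t = -1" using s by (simp add: s_def)
        finally show ?thesis by simp
      qed
      moreover have "norm ((1/s) *\<^sub>R (u + t *\<^sub>R y)) = norm (u + t *\<^sub>R y) / s" using s by simp
      moreover have "\<phi> ((1/s) *\<^sub>R u) = \<phi> u / s" using hom[OF u] by simp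
      ultimately have "(\<phi> u - norm (u + t *\<^sub>R y)) / s \<le> c" using s by (simp add: diff_divide_distrib)
      then have "\<phi> u - norm (u + t *\<^sub>R y) \<le> s * c" using s by (simp add: field_simps)
      then show ?thesis by (simp add: s_def)
    qed
  qed
qed

lemma good_neg:
  assumes "good (span S) \<phi>" "u \<in> span S"
  shows "\<phi> (- u) = - \<phi> u"
proof -
  have "\<phi> ((-1) *\<^sub>R u) = (-1) * \<phi> u" using assms unfolding good_def by blast
  then show ?thesis by simp
qed

lemma norm_neg_comb: "norm (- u + (- t) *\<^sub>R x) = norm (u + t *\<^sub>R (x::'a::real_normed_vector))"
  by (metis minus_add_distrib norm_minus_cancel scaleR_minus_left)

lemma norm_neg_comb2: "norm (- u - t *\<^sub>R x) = norm (u + t *\<^sub>R (x::'a::real_normed_vector))"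
  by (metis minus_add_distrib norm_minus_cancel diff_conv_add_uminus)

lemma lemK:
  fixes S :: "'a::real_normed_vector set"
  assumes inf: "infinite_dimensional TYPE('a)"
  shows "finite S \<Longrightarrow> length fs = k \<Longrightarrow> (\<forall>\<phi>\<in>set fs. good (span S) \<phi>) \<Longrightarrow>
    \<exists>x. x \<notin> span S \<and> (\<forall>\<phi>\<in>set fs. \<forall>u\<in>span S. \<forall>t. \<bar>\<phi> u\<bar> \<le> norm (u + t *\<^sub>R x))"
proof (induction k arbitrary: S fs)
  case 0
  then have "fs = []" by simp
  obtain x where "x \<notin> span S" using inf 0 unfolding infinite_dimensional_def by blast
  then show ?case using \<open>fs = []\<close> by auto
next
  case (Suc k)
  then obtain \<psi> fs' where fs: "fs = \<psi> # fs'" "length fs' = k" by (cases fs) auto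
  have g\<psi>: "good (span S) \<psi>" and gfs': "\<forall>\<phi>\<in>set fs'. good (span S) \<phi>" using Suc.prems fs by auto
  obtain x1 where x1: "x1 \<notin> span S" "\<forall>\<phi>\<in>set fs'. \<forall>u\<in>span S. \<forall>t. \<bar>\<phi> u\<bar> \<le> norm (u + t *\<^sub>R x1)"
    using Suc.IH[OF Suc.prems(1) fs(2) gfs'] by blast
  obtain c1 where c1: "\<forall>u\<in>span S. \<forall>t. \<psi> u + t * c1 \<le> norm (u + t *\<^sub>R x1)"
    using HB_step[OF g\<psi>] by blast
  define S1 where "S1 = insert x1 S"
  define fs1 where "fs1 = map (\<lambda>\<phi>. extf \<phi> S x1 0) fs'"
  define \<psi>1 where "\<psi>1 = extf \<psi> S x1 c1"
  have g\<psi>1: "good (span S1) \<psi>1" unfolding S1_def \<psi>1_def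
    using good_extf[OF g\<psi> x1(1)] c1 by blast
  have gfs1: "\<forall>\<phi>\<in>set fs1. good (span S1) \<phi>"
  proof
    fix \<phi>' assume "\<phi>' \<in> set fs1"
    then obtain \<phi> where \<phi>: "\<phi> \<in> set fs'" "\<phi>' = extf \<phi> S x1 0" unfolding fs1_def by auto
    have "\<phi> u + t * 0 \<le> norm (u + t *\<^sub>R x1)" if "u \<in> span S" for u t
    proof -
      have "\<bar>\<phi> u\<bar> \<le> norm (u + t *\<^sub>R x1)" using x1(2) \<phi>(1) that by blast
      then show ?thesis by simp
    qed
    then show "good (span S1) \<phi>'" unfolding S1_def \<phi>(2)
      using good_extf[OF _ x1(1)] gfs' \<phi>(1) by blast
  qed
  have fin1: "finite S1" using Suc.prems(1) S1_def by simp
  have len1: "length fs1 = k" using fs(2) fs1_def by simp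
  obtain x2 where x2: "x2 \<notin> span S1" "\<forall>\<phi>\<in>set fs1. \<forall>u\<in>span S1. \<forall>t. \<bar>\<phi> u\<bar> \<le> norm (u + t *\<^sub>R x2)"
    using Suc.IH[OF fin1 len1 gfs1] by blast
  obtain c2 where c2: "\<forall>w\<in>span S1. \<forall>t. \<psi>1 w + t * c2 \<le> norm (w + t *\<^sub>R x2)"
    using HB_step[OF g\<psi>1] by blast
  show ?case
  proof (cases "c1 = 0")
    case True
    have cl: "\<psi> u \<le> norm (u + t *\<^sub>R x1)" if "u \<in> span S" for u t
      using c1 that True by force
    show ?thesis
    proof (intro exI conjI ballI allI)
      show "x1 \<notin> span S" by fact
      fix \<phi> u t assume \<phi>: "\<phi> \<in> set fs" and u: "u \<in> span S"
      show "\<bar>\<phi> u\<bar> \<le> norm (u + t *\<^sub>R x1)"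
      proof (cases "\<phi> = \<psi>")
        case True
        have "\<psi> u \<le> norm (u + t *\<^sub>R x1)" using cl u by blast
        moreover have "\<psi> (-u) \<le> norm (-u + (-t) *\<^sub>R x1)" using cl u span_neg by blast
        ultimately show ?thesis using True good_neg[OF g\<psi> u] by (simp add: abs_le_iff norm_neg_comb2)
      next
        case False then have "\<phi> \<in> set fs'" using \<phi> fs by auto
        then show ?thesis using x1(2) u by blast
      qed
    qed
  next
    case False
    define x where "x = x2 - (c2/c1) *\<^sub>R x1"
    have x1S1: "x1 \<in> span S1" by (simp add: S1_def span_base)
    have SS1: "span S \<subseteq> span S1" unfolding S1_def by (simp add: span_mono subset_insertI)
    have xnot: "x \<notin> span S"
    proof
      assume "x \<in> span S"
      then have "x \<in> span S1" using SS1 by blast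
      then have "x + (c2/c1) *\<^sub>R x1 \<in> span S1" using x1S1 by (intro span_add span_scale)
      then show False using x2(1) by (simp add: x_def)
    qed
    have w_in: "u + (-(t*c2/c1)) *\<^sub>R x1 \<in> span S1" if "u \<in> span S" for u t
      using that SS1 x1S1 by (intro span_add span_scale) auto
    have decomp: "u + t *\<^sub>R x = (u + (-(t*c2/c1)) *\<^sub>R x1) + t *\<^sub>R x2" for u t
      by (simp add: x_def algebra_simps)
    have cl: "\<psi> u \<le> norm (u + t *\<^sub>R x)" if u: "u \<in> span S" for u t
    proof -
      have "\<psi>1 (u + (-(t*c2/c1)) *\<^sub>R x1) = \<psi> u + (-(t*c2/c1)) * c1"
        unfolding \<psi>1_def by (rule extf_eq[OF x1(1) u])
      also have "\<dots> = \<psi> u - t * c2" using False by simp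
      finally have e: "\<psi>1 (u + (-(t*c2/c1)) *\<^sub>R x1) = \<psi> u - t * c2" .
      have "\<psi>1 (u + (-(t*c2/c1)) *\<^sub>R x1) + t * c2 \<le> norm ((u + (-(t*c2/c1)) *\<^sub>R x1) + t *\<^sub>R x2)"
        using c2 w_in[OF u] by blast
      then have "\<psi> u \<le> norm ((u + (-(t*c2/c1)) *\<^sub>R x1) + t *\<^sub>R x2)" using e by linarith
      then show ?thesis by (simp only: decomp[symmetric])
    qed
    show ?thesis
    proof (intro exI[of _ x] conjI xnot ballI allI)
      fix \<phi> u t assume \<phi>: "\<phi> \<in> set fs" and u: "u \<in> span S"
      show "\<bar>\<phi> u\<bar> \<le> norm (u + t *\<^sub>R x)"
      proof (cases "\<phi> = \<psi>")
        case True
        have "\<psi> u \<le> norm (u + t *\<^sub>R x)" using cl u by blast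
        moreover have "\<psi> (-u) \<le> norm (-u + (-t) *\<^sub>R x)" using cl u span_neg by blast
        ultimately show ?thesis using True good_neg[OF g\<psi> u] by (simp add: abs_le_iff norm_neg_comb2)
      next
        case False then have \<phi>': "\<phi> \<in> set fs'" using \<phi> fs by auto
        then have "extf \<phi> S x1 0 \<in> set fs1" unfolding fs1_def by simp
        then have "\<bar>extf \<phi> S x1 0 (u + (-(t*c2/c1)) *\<^sub>R x1)\<bar> \<le> norm ((u + (-(t*c2/c1)) *\<^sub>R x1) + t *\<^sub>R x2)"
          using x2(2) w_in[OF u] by blast
        moreover have "extf \<phi> S x1 0 (u + (-(t*c2/c1)) *\<^sub>R x1) = \<phi> u"
          using extf_eq[OF x1(1) u, of \<phi> 0 "-(t*c2/c1)"] by simp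
        ultimately have "\<bar>\<phi> u\<bar> \<le> norm ((u + (-(t*c2/c1)) *\<^sub>R x1) + t *\<^sub>R x2)" by simp
        then show ?thesis by (simp only: decomp[symmetric])
      qed
    qed
  qed
qed

definition Qn :: "(nat \<Rightarrow> 'a::real_normed_vector) \<Rightarrow> nat \<Rightarrow> bool" where
  "Qn v n \<longleftrightarrow> (\<forall>c j. j < n \<longrightarrow> \<bar>c j\<bar> \<le> norm (\<Sum>i<n. c i *\<^sub>R v i))"

lemma span_repr:
  fixes v :: "nat \<Rightarrow> 'a::real_vector"
  shows "y \<in> span (v ` {..<n}) \<Longrightarrow> \<exists>c. y = (\<Sum>i<n. c i *\<^sub>R v i)"
proof (induction n arbitrary: y)
  case 0
  then show ?case by simp
next
  case (Suc n)
  have "v ` {..<Suc n} = insert (v n) (v ` {..<n})" by (simp add: lessThan_Suc)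
  then obtain k where "y - k *\<^sub>R v n \<in> span (v ` {..<n})" using Suc.prems span_insert[of "v n"] by auto
  then obtain c where c: "y - k *\<^sub>R v n = (\<Sum>i<n. c i *\<^sub>R v i)" using Suc.IH by blast
  have "(\<Sum>i<Suc n. (c(n := k)) i *\<^sub>R v i) = (\<Sum>i<n. (c(n := k)) i *\<^sub>R v i) + k *\<^sub>R v n" by simp
  also have "(\<Sum>i<n. (c(n := k)) i *\<^sub>R v i) = (\<Sum>i<n. c i *\<^sub>R v i)" by (rule sum.cong) auto
  finally have "y = (\<Sum>i<Suc n. (c(n := k)) i *\<^sub>R v i)" using c by (simp add: algebra_simps)
  then show ?case by blast
qed

lemma sum_in_span: "(\<Sum>i<n. c i *\<^sub>R v i) \<in> span (v ` {..<n})"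
  by (intro span_sum span_scale span_base) auto

lemma Qn_unique:
  assumes "Qn v n" "(\<Sum>i<n. c i *\<^sub>R v i) = (\<Sum>i<n. d i *\<^sub>R v i)" "j < n"
  shows "c j = d j"
proof -
  have "\<bar>(\<lambda>i. c i - d i) j\<bar> \<le> norm (\<Sum>i<n. (\<lambda>i. c i - d i) i *\<^sub>R v i)"
    using assms(1)[unfolded Qn_def, rule_format, of j "\<lambda>i. c i - d i"] assms(3) by blast
  then have "\<bar>c j - d j\<bar> \<le> norm (\<Sum>i<n. (c i - d i) *\<^sub>R v i)" by simp
  also have "(\<Sum>i<n. (c i - d i) *\<^sub>R v i) = (\<Sum>i<n. c i *\<^sub>R v i) - (\<Sum>i<n. d i *\<^sub>R v i)"
    by (simp add: scaleR_diff_left sum_subtractf)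
  finally show ?thesis using assms(2) by simp
qed

definition chi :: "(nat \<Rightarrow> 'a::real_vector) \<Rightarrow> nat \<Rightarrow> nat \<Rightarrow> 'a \<Rightarrow> real" where
  "chi v n j y = (SOME c. y = (\<Sum>i<n. c i *\<^sub>R v i)) j"

lemma chi_eq:
  assumes "Qn v n" "j < n"
  shows "chi v n j (\<Sum>i<n. c i *\<^sub>R v i) = c j"
proof -
  have "\<exists>d. (\<Sum>i<n. c i *\<^sub>R v i) = (\<Sum>i<n. d i *\<^sub>R v i)" by blast
  then have "(\<Sum>i<n. c i *\<^sub>R v i) = (\<Sum>i<n. (SOME d. (\<Sum>i<n. c i *\<^sub>R v i) = (\<Sum>i<n. d i *\<^sub>R v i)) i *\<^sub>R v i)"
    by (rule someI_ex)
  then have "c j = (SOME d. (\<Sum>i<n. c i *\<^sub>R v i) = (\<Sum>i<n. d i *\<^sub>R v i)) j"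
    by (rule Qn_unique[OF assms(1) _ assms(2)])
  then show ?thesis unfolding chi_def by simp
qed

lemma chi_good:
  assumes "Qn v n" "j < n"
  shows "good (span (v ` {..<n})) (chi v n j)"
  unfolding good_def
proof (intro conjI ballI allI)
  fix a b assume a: "a \<in> span (v ` {..<n})" and b: "b \<in> span (v ` {..<n})"
  obtain c where c: "a = (\<Sum>i<n. c i *\<^sub>R v i)" using span_repr[OF a] by blast
  obtain d where d: "b = (\<Sum>i<n. d i *\<^sub>R v i)" using span_repr[OF b] by blast
  have "a + b = (\<Sum>i<n. (c i + d i) *\<^sub>R v i)" using c d by (simp add: scaleR_add_left sum.distrib)
  then show "chi v n j (a + b) = chi v n j a + chi v n j b"
    using c d chi_eq[OF assms] by simp
next
  fix r a assume a: "a \<in> span (v ` {..<n})"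
  obtain c where c: "a = (\<Sum>i<n. c i *\<^sub>R v i)" using span_repr[OF a] by blast
  have "r *\<^sub>R a = (\<Sum>i<n. (r * c i) *\<^sub>R v i)" using c by (simp add: scaleR_sum_right)
  then show "chi v n j (r *\<^sub>R a) = r * chi v n j a"
    using c chi_eq[OF assms] by simp
next
  fix a assume a: "a \<in> span (v ` {..<n})"
  obtain c where c: "a = (\<Sum>i<n. c i *\<^sub>R v i)" using span_repr[OF a] by blast
  have "\<bar>c j\<bar> \<le> norm a" using assms c unfolding Qn_def by blast
  then show "chi v n j a \<le> norm a" using c chi_eq[OF assms] by simp
qed

lemma scaled_infdist_le:
  assumes "u \<in> span S"
  shows "\<bar>s\<bar> * infdist x (span S) \<le> norm (u + s *\<^sub>R x)"
proof (cases "s = 0")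
  case True then show ?thesis by simp
next
  case False
  have "infdist x (span S) \<le> dist x (-(1/s) *\<^sub>R u)"
    by (rule infdist_le) (simp add: span_scale span_neg assms)
  also have "dist x (-(1/s) *\<^sub>R u) = norm ((1/s) *\<^sub>R (u + s *\<^sub>R x))"
    using False by (simp add: dist_norm algebra_simps)
  also have "\<dots> = norm (u + s *\<^sub>R x) / \<bar>s\<bar>" by simp
  finally show ?thesis using False by (simp add: field_simps)
qed

lemma Qn_step:
  fixes v :: "nat \<Rightarrow> 'a::real_normed_vector"
  assumes inf: "infinite_dimensional TYPE('a)" and Q: "Qn v n"
  shows "\<exists>y. Qn (v(n := y)) (Suc n) \<and> (n = 0 \<longrightarrow> norm y = 1)"
proof -
  define S where "S = v ` {..<n}"
  define fs where "fs = map (\<lambda>j. chi v n j) [0..<n]"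
  have gfs: "\<forall>\<phi>\<in>set fs. good (span S) \<phi>" unfolding fs_def S_def using chi_good[OF Q] by auto
  obtain x where x: "x \<notin> span S" "\<forall>\<phi>\<in>set fs. \<forall>u\<in>span S. \<forall>t. \<bar>\<phi> u\<bar> \<le> norm (u + t *\<^sub>R x)"
    using lemK[OF inf _ refl gfs] unfolding S_def by blast
  define d where "d = infdist x (span S)"
  have d: "d > 0" unfolding d_def S_def using infdist_span_pos x(1) S_def by blast
  define y where "y = (1/d) *\<^sub>R x"
  have "Qn (v(n := y)) (Suc n)" unfolding Qn_def
  proof (intro allI impI)
    fix c :: "nat \<Rightarrow> real" and j assume j: "j < Suc n"
    define u where "u = (\<Sum>i<n. c i *\<^sub>R v i)"
    have u: "u \<in> span S" unfolding u_def S_def by (rule sum_in_span)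
    have "(\<Sum>i<Suc n. c i *\<^sub>R (v(n := y)) i) = (\<Sum>i<n. c i *\<^sub>R (v(n := y)) i) + c n *\<^sub>R y" by simp
    also have "(\<Sum>i<n. c i *\<^sub>R (v(n := y)) i) = u" unfolding u_def by (rule sum.cong) auto
    finally have eq: "(\<Sum>i<Suc n. c i *\<^sub>R (v(n := y)) i) = u + (c n / d) *\<^sub>R x" by (simp add: y_def)
    show "\<bar>c j\<bar> \<le> norm (\<Sum>i<Suc n. c i *\<^sub>R (v(n := y)) i)"
    proof (cases "j < n")
      case True
      have "chi v n j \<in> set fs" unfolding fs_def using True by simp
      then have "\<bar>chi v n j u\<bar> \<le> norm (u + (c n / d) *\<^sub>R x)" using x(2) u by blast
      moreover have "chi v n j u = c j" unfolding u_def by (rule chi_eq[OF Q True])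
      ultimately show ?thesis using eq by simp
    next
      case False
      then have jn: "j = n" using j by simp
      have "\<bar>c n / d\<bar> * d \<le> norm (u + (c n / d) *\<^sub>R x)" unfolding d_def by (rule scaled_infdist_le[OF u])
      moreover have "\<bar>c n / d\<bar> * d = \<bar>c n\<bar>" using d by (simp add: abs_div)
      ultimately show ?thesis using eq jn by simp
    qed
  qed
  moreover have "n = 0 \<longrightarrow> norm y = 1"
  proof
    assume n0: "n = 0"
    then have "span S = {0}" unfolding S_def by simp
    then have "d = norm x" unfolding d_def by (simp add: infdist_singleton)
    then show "norm y = 1" using d by (simp add: y_def)
  qed
  ultimately show ?thesis by blast
qed

definition nextv :: "(nat \<Rightarrow> 'a::real_normed_vector) \<Rightarrow> nat \<Rightarrow> 'a" where
  "nextv v n = (SOME y. Qn (v(n := y)) (Suc n) \<and> (n = 0 \<longrightarrow> norm y = 1))"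

primrec bseq :: "nat \<Rightarrow> nat \<Rightarrow> 'a::real_normed_vector" where
  "bseq 0 = (\<lambda>_. 0)"
| "bseq (Suc n) = (bseq n)(n := nextv (bseq n) n)"

lemma bseq_Q:
  assumes inf: "infinite_dimensional TYPE('a::real_normed_vector)"
  shows "Qn (bseq n :: nat \<Rightarrow> 'a) n \<and> (n > 0 \<longrightarrow> norm (bseq n 0 :: 'a) = 1)"
proof (induction n)
  case 0
  then show ?case by (simp add: Qn_def)
next
  case (Suc n)
  have "\<exists>y. Qn ((bseq n :: nat \<Rightarrow> 'a)(n := y)) (Suc n) \<and> (n = 0 \<longrightarrow> norm y = 1)"
    using Qn_step[OF inf] Suc.IH by blast
  then have h: "Qn ((bseq n :: nat \<Rightarrow> 'a)(n := nextv (bseq n) n)) (Suc n) \<and> (n = 0 \<longrightarrow> norm (nextv (bseq n :: nat \<Rightarrow> 'a) n) = 1)"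
    unfolding nextv_def by (rule someI_ex)
  have e: "(bseq (Suc n) :: nat \<Rightarrow> 'a) = (bseq n)(n := nextv (bseq n) n)" by simp
  have "Qn (bseq (Suc n) :: nat \<Rightarrow> 'a) (Suc n)" unfolding e using h by blast
  moreover have "norm (bseq (Suc n) 0 :: 'a) = 1"
  proof (cases "n = 0")
    case True then show ?thesis using h by simp
  next
    case False then show ?thesis using Suc.IH by simp
  qed
  ultimately show ?case by blast
qed

lemma bseq_stable: "i < m \<Longrightarrow> bseq m i = bseq (Suc i) i"
proof (induction m)
  case 0 then show ?case by simp
next
  case (Suc m)
  then show ?case by (cases "i = m") auto
qed

lemma seq_exists:
  assumes inf: "infinite_dimensional TYPE('a::real_normed_vector)"
  shows "\<exists>v::nat \<Rightarrow> 'a. norm (v 0) = 1 \<and> (\<forall>n c j. j < n \<longrightarrow> \<bar>c j\<bar> \<le> norm (\<Sum>i<n. c i *\<^sub>R v i))"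
proof (intro exI conjI allI impI)
  define v :: "nat \<Rightarrow> 'a" where "v = (\<lambda>i. bseq (Suc i) i)"
  show "norm (v 0) = 1" unfolding v_def using bseq_Q[OF inf, of 1] by simp
  fix n c j assume j: "j < (n::nat)"
  have "(\<Sum>i<n. c i *\<^sub>R v i) = (\<Sum>i<n. c i *\<^sub>R bseq n i)"
    unfolding v_def by (rule sum.cong) (auto simp: bseq_stable)
  then show "\<bar>c j\<bar> \<le> norm (\<Sum>i<n. c i *\<^sub>R v i)"
    using bseq_Q[OF inf, of n, THEN conjunct1, unfolded Qn_def, rule_format, of j c] j by simp
qed

lemma ent_term:
  fixes t a m :: real
  assumes "0 \<le> t" "t \<le> 1" "0 \<le> a" "0 \<le> m" "t * a \<le> m"
  shows "t * (a - m) \<le> t * a * (ln a - ln m) \<and> t * a * (ln a - ln m) \<le> (1 - t) * a"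
proof (cases "t = 0 \<or> a = 0")
  case True
  then show ?thesis using assms by (auto simp: mult_nonneg_nonneg)
next
  case False
  then have t: "t > 0" and a: "a > 0" using assms by auto
  have m: "m > 0" using t a assms(5) by (smt (verit) mult_pos_pos)
  define r where "r = a / m"
  have r: "r > 0" using a m r_def by simp
  have lr: "ln a - ln m = ln r" unfolding r_def using a m by (simp add: ln_div)
  have up: "ln r \<le> r - 1" using ln_le_minus_one[OF r] .
  have "ln (1/r) \<le> 1/r - 1" using ln_le_minus_one r by simp
  then have lo: "ln r \<ge> 1 - 1/r" using r by (simp add: ln_div)
  have ta: "t * a > 0" using t a by simp
  have "t * a * ln r \<le> t * a * (r - 1)" using up ta by (simp add: mult_left_mono)
  also have "t * a * (r - 1) = a * (t * a / m) - t * a" unfolding r_def by (simp add: field_simps)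
  also have "a * (t * a / m) \<le> a * 1" using assms(5) m a by (intro mult_left_mono) (auto simp: field_simps)
  finally have U: "t * a * ln r \<le> (1 - t) * a" by (simp add: algebra_simps)
  have "t * a * (1 - 1/r) \<le> t * a * ln r" using lo ta by (simp add: mult_left_mono)
  moreover have "t * a * (1 - 1/r) = t * (a - m)" unfolding r_def using a m by (simp add: field_simps)
  ultimately have L: "t * (a - m) \<le> t * a * ln r" by simp
  show ?thesis using U L lr by simp
qed

lemma ent_mix:
  fixes t a b :: real
  assumes "0 \<le> t" "t \<le> 1" "0 \<le> a" "0 \<le> b"
  defines "m \<equiv> t * a + (1 - t) * b"
  shows "0 \<le> t * (a * ln a) + (1 - t) * (b * ln b) - m * ln m
     \<and> t * (a * ln a) + (1 - t) * (b * ln b) - m * ln m \<le> (1 - t) * a + t * b"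
proof -
  have m0: "0 \<le> m" unfolding m_def using assms by simp
  have A: "t * (a - m) \<le> t * a * (ln a - ln m) \<and> t * a * (ln a - ln m) \<le> (1 - t) * a"
    using ent_term[OF assms(1,2,3) m0] assms unfolding m_def by (simp add: mult_nonneg_nonneg)
  have B: "(1 - t) * (b - m) \<le> (1 - t) * b * (ln b - ln m) \<and> (1 - t) * b * (ln b - ln m) \<le> (1 - (1 - t)) * b"
    using ent_term[of "1 - t" b m] m0 assms unfolding m_def by (simp add: mult_nonneg_nonneg)
  have E: "t * (a * ln a) + (1 - t) * (b * ln b) - m * ln m = t * a * (ln a - ln m) + (1 - t) * b * (ln b - ln m)"
    unfolding m_def by (simp add: algebra_simps)
  have Z: "t * (a - m) + (1 - t) * (b - m) = 0" unfolding m_def by (simp add: algebra_simps)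
  have B2: "(1 - t) * b * (ln b - ln m) \<le> t * b" using B by simp
  show ?thesis using A B B2 E Z by linarith
qed

lemma low_est:
  fixes v :: "nat \<Rightarrow> 'a::real_normed_vector"
  assumes Q: "\<forall>n c j. j < n \<longrightarrow> \<bar>c j\<bar> \<le> norm (\<Sum>i<n. c i *\<^sub>R v i)" and T: "finite T"
  shows "\<bar>s\<bar> \<le> norm (s *\<^sub>R v 0 + (\<Sum>i\<in>T. c i *\<^sub>R v (Suc i)))"
    and "j \<in> T \<Longrightarrow> \<bar>c j\<bar> \<le> norm (s *\<^sub>R v 0 + (\<Sum>i\<in>T. c i *\<^sub>R v (Suc i)))"
proof -
  obtain M where M: "T \<subseteq> {..<M}" using finite_nat_bounded[OF T] by blast
  define d where "d = (\<lambda>k. if k = 0 then s else if k - 1 \<in> T then c (k - 1) else 0)"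
  have "(\<Sum>k<Suc M. d k *\<^sub>R v k) = d 0 *\<^sub>R v 0 + (\<Sum>k<M. d (Suc k) *\<^sub>R v (Suc k))"
    by (rule sum.lessThan_Suc_shift)
  also have "(\<Sum>k<M. d (Suc k) *\<^sub>R v (Suc k)) = (\<Sum>k<M. if k \<in> T then c k *\<^sub>R v (Suc k) else 0)"
    by (rule sum.cong) (auto simp: d_def)
  also have "\<dots> = (\<Sum>k\<in>T. c k *\<^sub>R v (Suc k))"
    using M by (simp add: sum.If_cases Int_absorb1 Int_absorb2 inf_commute)
  finally have eq: "(\<Sum>k<Suc M. d k *\<^sub>R v k) = s *\<^sub>R v 0 + (\<Sum>i\<in>T. c i *\<^sub>R v (Suc i))"
    by (simp add: d_def)
  have "\<bar>d 0\<bar> \<le> norm (\<Sum>k<Suc M. d k *\<^sub>R v k)" using Q by blast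
  then show "\<bar>s\<bar> \<le> norm (s *\<^sub>R v 0 + (\<Sum>i\<in>T. c i *\<^sub>R v (Suc i)))" using eq by (simp add: d_def)
  assume j: "j \<in> T"
  then have "Suc j < Suc M" using M by auto
  then have "\<bar>d (Suc j)\<bar> \<le> norm (\<Sum>k<Suc M. d k *\<^sub>R v k)" using Q by blast
  then show "\<bar>c j\<bar> \<le> norm (s *\<^sub>R v 0 + (\<Sum>i\<in>T. c i *\<^sub>R v (Suc i)))" using eq j by (simp add: d_def)
qed

definition supp :: "(nat \<Rightarrow> real) \<Rightarrow> nat set" where "supp x = {i. x i \<noteq> 0}"

definition Simp :: "(nat \<Rightarrow> real) set" where
  "Simp = {x. finite (supp x) \<and> (\<forall>i. 0 \<le> x i) \<and> sum x (supp x) = 1}"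

definition Ent :: "(nat \<Rightarrow> real) \<Rightarrow> real" where
  "Ent x = (\<Sum>i\<in>supp x. - (x i * ln (x i)))"

definition Emb :: "(nat \<Rightarrow> 'a::real_normed_vector) \<Rightarrow> (nat \<Rightarrow> real) \<Rightarrow> 'a" where
  "Emb v x = Ent x *\<^sub>R v 0 + (\<Sum>i\<in>supp x. (x i * real (Suc i)) *\<^sub>R v (Suc i))"

lemma ent_T: "finite T \<Longrightarrow> supp x \<subseteq> T \<Longrightarrow> Ent x = (\<Sum>i\<in>T. - (x i * ln (x i)))"
  unfolding Ent_def by (rule sum.mono_neutral_left) (auto simp: supp_def)

lemma fpart_T: fixes v :: "nat \<Rightarrow> 'a::real_vector" assumes "finite T" "supp x \<subseteq> T" shows
  "(\<Sum>i\<in>supp x. (x i * real (Suc i)) *\<^sub>R v (Suc i)) = (\<Sum>i\<in>T. (x i * real (Suc i)) *\<^sub>R v (Suc i))"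
proof (rule sum.mono_neutral_left[OF assms])
  show "\<forall>i\<in>T - supp x. (x i * real (Suc i)) *\<^sub>R v (Suc i) = 0" by (simp add: supp_def)
qed

lemma sum_T: "finite T \<Longrightarrow> supp x \<subseteq> T \<Longrightarrow> sum x (supp x) = sum x T"
  by (rule sum.mono_neutral_left) (auto simp: supp_def)

lemma emb_T: assumes "finite T" "supp x \<subseteq> T" shows
  "Emb v x = (\<Sum>i\<in>T. - (x i * ln (x i))) *\<^sub>R v 0 + (\<Sum>i\<in>T. (x i * real (Suc i)) *\<^sub>R v (Suc i))"
  unfolding Emb_def ent_T[OF assms] fpart_T[OF assms] by (rule refl)

lemma emb_mix:
  assumes x: "x \<in> Simp" and y: "y \<in> Simp" and t: "0 \<le> t" "t \<le> 1"
  defines "m \<equiv> (\<lambda>i. t * x i + (1 - t) * y i)"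
  shows "m \<in> Simp \<and> dist (t *\<^sub>R Emb v x + (1 - t) *\<^sub>R Emb v y) (Emb v m) \<le> norm (v 0)"
proof -
  define T where "T = supp x \<union> supp y"
  have fT: "finite T" using x y unfolding T_def Simp_def by auto
  have sx: "supp x \<subseteq> T" and sy: "supp y \<subseteq> T" unfolding T_def by auto
  have sm: "supp m \<subseteq> T" unfolding T_def supp_def m_def by auto
  have x0: "\<forall>i. 0 \<le> x i" and y0: "\<forall>i. 0 \<le> y i" using x y unfolding Simp_def by auto
  have sumx: "sum x T = 1" using x sum_T[OF fT sx] unfolding Simp_def by auto
  have sumy: "sum y T = 1" using y sum_T[OF fT sy] unfolding Simp_def by auto
  have m0: "\<forall>i. 0 \<le> m i" using x0 y0 t unfolding m_def by (simp add: mult_nonneg_nonneg)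
  have "sum m T = t * sum x T + (1 - t) * sum y T"
    unfolding m_def by (simp add: sum.distrib sum_distrib_left)
  then have "sum m (supp m) = 1" using sum_T[OF fT sm] sumx sumy by simp
  then have mS: "m \<in> Simp" unfolding Simp_def using finite_subset[OF sm fT] m0 by blast
  define E where "E = (\<lambda>i. t * (x i * ln (x i)) + (1 - t) * (y i * ln (y i)) - m i * ln (m i))"
  have Eb: "0 \<le> E i \<and> E i \<le> (1 - t) * x i + t * y i" for i
    unfolding E_def m_def using ent_mix[OF t] x0 y0 by blast
  have Esum0: "0 \<le> sum E T" using Eb by (simp add: sum_nonneg)
  have "sum E T \<le> (\<Sum>i\<in>T. (1 - t) * x i + t * y i)" using Eb by (simp add: sum_mono)
  also have "\<dots> = (1 - t) * sum x T + t * sum y T" by (simp add: sum.distrib sum_distrib_left)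
  finally have Esum1: "sum E T \<le> 1" using sumx sumy by simp
  have ex: "Emb v x = (\<Sum>i\<in>T. - (x i * ln (x i))) *\<^sub>R v 0 + (\<Sum>i\<in>T. (x i * real (Suc i)) *\<^sub>R v (Suc i))"
    by (rule emb_T[OF fT sx])
  have ey: "Emb v y = (\<Sum>i\<in>T. - (y i * ln (y i))) *\<^sub>R v 0 + (\<Sum>i\<in>T. (y i * real (Suc i)) *\<^sub>R v (Suc i))"
    by (rule emb_T[OF fT sy])
  have em: "Emb v m = (\<Sum>i\<in>T. - (m i * ln (m i))) *\<^sub>R v 0 + (\<Sum>i\<in>T. (m i * real (Suc i)) *\<^sub>R v (Suc i))"
    by (rule emb_T[OF fT sm])
  have fp: "t *\<^sub>R (\<Sum>i\<in>T. (x i * real (Suc i)) *\<^sub>R v (Suc i)) + (1 - t) *\<^sub>R (\<Sum>i\<in>T. (y i * real (Suc i)) *\<^sub>R v (Suc i))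
      = (\<Sum>i\<in>T. (m i * real (Suc i)) *\<^sub>R v (Suc i))"
    unfolding scaleR_sum_right sum.distrib[symmetric]
    by (rule sum.cong) (auto simp: m_def algebra_simps)
  have ep: "t * (\<Sum>i\<in>T. - (x i * ln (x i))) + (1 - t) * (\<Sum>i\<in>T. - (y i * ln (y i))) - (\<Sum>i\<in>T. - (m i * ln (m i)))
      = - sum E T"
    unfolding E_def by (simp add: sum_distrib_left sum_subtractf sum.distrib algebra_simps sum_negf)
  have "t *\<^sub>R Emb v x + (1 - t) *\<^sub>R Emb v y - Emb v m = (- sum E T) *\<^sub>R v 0"
  proof -
    have "t *\<^sub>R Emb v x + (1 - t) *\<^sub>R Emb v y - Emb v m =
      (t * (\<Sum>i\<in>T. - (x i * ln (x i))) + (1 - t) * (\<Sum>i\<in>T. - (y i * ln (y i))) - (\<Sum>i\<in>T. - (m i * ln (m i)))) *\<^sub>R v 0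
      + (t *\<^sub>R (\<Sum>i\<in>T. (x i * real (Suc i)) *\<^sub>R v (Suc i)) + (1 - t) *\<^sub>R (\<Sum>i\<in>T. (y i * real (Suc i)) *\<^sub>R v (Suc i))
         - (\<Sum>i\<in>T. (m i * real (Suc i)) *\<^sub>R v (Suc i)))"
      unfolding ex ey em by (simp add: algebra_simps)
    then show ?thesis unfolding fp ep by simp
  qed
  then have "dist (t *\<^sub>R Emb v x + (1 - t) *\<^sub>R Emb v y) (Emb v m) = sum E T * norm (v 0)"
    using Esum0 by (simp add: dist_norm)
  also have "\<dots> \<le> norm (v 0)" using Esum1 Esum0 by (simp add: mult_left_le_one_le)
  finally show ?thesis using mS by blast
qed

theorem theorem3p3:
  assumes "infinite_dimensional TYPE('a::real_normed_vector)"
  shows "\<exists>A::'a set. A \<noteq> {} \<and> approx_convex A \<and> hausdorff_ext A (convex hull A) = \<infinity>"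
proof -
  obtain v :: "nat \<Rightarrow> 'a" where v1: "norm (v 0) = 1"
    and Q: "\<forall>n c j. j < n \<longrightarrow> \<bar>c j\<bar> \<le> norm (\<Sum>i<n. c i *\<^sub>R v i)"
    using seq_exists[OF assms] by blast
  define A where "A = Emb v ` Simp"
  define dl where "dl = (\<lambda>i::nat. (\<lambda>k::nat. if k = i then 1 else (0::real)))"
  have dl_supp: "supp (dl i) = {i}" for i unfolding supp_def dl_def by auto
  have dl_Simp: "dl i \<in> Simp" for i unfolding Simp_def using dl_supp by (auto simp: dl_def)
  have dl_Emb: "Emb v (dl i) = real (Suc i) *\<^sub>R v (Suc i)" for i
    unfolding Emb_def Ent_def dl_supp by (simp add: dl_def)
  have dlA: "Emb v (dl i) \<in> A" for i unfolding A_def using dl_Simp by blast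
  have Ane: "A \<noteq> {}" using dlA by blast
  have ac: "approx_convex A"
    unfolding approx_convex_def
  proof (intro ballI allI impI)
    fix a b and t :: real assume a: "a \<in> A" and b: "b \<in> A" and t: "0 \<le> t \<and> t \<le> 1"
    obtain x where x: "x \<in> Simp" "a = Emb v x" using a A_def by blast
    obtain y where y: "y \<in> Simp" "b = Emb v y" using b A_def by blast
    define m where "m = (\<lambda>i. t * x i + (1 - t) * y i)"
    have t1: "0 \<le> t" and t2: "t \<le> 1" using t by auto
    have mm: "m \<in> Simp \<and> dist (t *\<^sub>R Emb v x + (1 - t) *\<^sub>R Emb v y) (Emb v m) \<le> norm (v 0)"
      unfolding m_def by (rule emb_mix[OF x(1) y(1) t1 t2])
    have "Emb v m \<in> A" using mm A_def by blast
    then have "infdist (t *\<^sub>R a + (1 - t) *\<^sub>R b) A \<le> dist (t *\<^sub>R a + (1 - t) *\<^sub>R b) (Emb v m)"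
      by (rule infdist_le)
    also have "\<dots> \<le> 1" unfolding x(2) y(2) using mm v1 by simp
    finally show "infdist (t *\<^sub>R a + (1 - t) *\<^sub>R b) A \<le> 1" .
  qed
  have far: "\<exists>z\<in>convex hull A. real n \<le> infdist z A" for n :: nat
  proof -
    obtain m :: nat where mgt: "2 * exp (2 * real n) < real m" using reals_Archimedean2 by blast
    have mge: "real m \<ge> 2 * exp (2 * real n)" using mgt by simp
    have "1 \<le> exp (2 * real n)" by simp
    then have "real m > 2" using mgt by linarith
    then have m2: "m \<ge> 2" by simp
    have mpos: "real m > 0" using m2 by simp
    define p where "p = 2 * m * n"
    define I where "I = {p..<p+m}"
    have fI: "finite I" unfolding I_def by simp
    have cardI: "card I = m" unfolding I_def by simp
    define z where "z = (\<Sum>i\<in>I. (1 / real m) *\<^sub>R Emb v (dl i))"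
    have zH: "z \<in> convex hull A" unfolding z_def
    proof (rule convex_sum[OF fI convex_convex_hull])
      show "(\<Sum>i\<in>I. 1 / real m) = 1" using cardI mpos by simp
      show "0 \<le> 1 / real m" for i using mpos by simp
      show "Emb v (dl i) \<in> convex hull A" for i by (rule hull_inc[OF dlA])
    qed
    have z_eq: "z = (\<Sum>i\<in>I. (1 / real m * real (Suc i)) *\<^sub>R v (Suc i))"
      unfolding z_def dl_Emb by simp
    have "real n \<le> dist z a" if aA: "a \<in> A" for a
    proof -
      obtain x where x: "x \<in> Simp" "a = Emb v x" using aA A_def by blast
      have x0: "\<forall>i. 0 \<le> x i" and fsx: "finite (supp x)" and sx1: "sum x (supp x) = 1"
        using x(1) unfolding Simp_def by auto
      define T where "T = I \<union> supp x"
      have fT: "finite T" unfolding T_def using fI fsx by simp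
      have IT: "I \<subseteq> T" and sT: "supp x \<subseteq> T" unfolding T_def by auto
      define c where "c = (\<lambda>i. ((if i \<in> I then 1 / real m else 0) - x i) * real (Suc i))"
      have zT: "z = (\<Sum>i\<in>T. ((if i \<in> I then 1 / real m else 0) * real (Suc i)) *\<^sub>R v (Suc i))"
        unfolding z_eq by (rule sum.mono_neutral_cong_left[OF fT IT]) auto
      have eT: "Emb v x = Ent x *\<^sub>R v 0 + (\<Sum>i\<in>T. (x i * real (Suc i)) *\<^sub>R v (Suc i))"
        unfolding Emb_def fpart_T[OF fT sT] ..
      have "z - Emb v x = (- Ent x) *\<^sub>R v 0 + ((\<Sum>i\<in>T. ((if i \<in> I then 1 / real m else 0) * real (Suc i)) *\<^sub>R v (Suc i))
            - (\<Sum>i\<in>T. (x i * real (Suc i)) *\<^sub>R v (Suc i)))"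
        unfolding zT eT by (simp add: algebra_simps)
      also have "(\<Sum>i\<in>T. ((if i \<in> I then 1 / real m else 0) * real (Suc i)) *\<^sub>R v (Suc i))
            - (\<Sum>i\<in>T. (x i * real (Suc i)) *\<^sub>R v (Suc i)) = (\<Sum>i\<in>T. c i *\<^sub>R v (Suc i))"
        unfolding c_def sum_subtractf[symmetric] by (rule sum.cong) (auto simp: algebra_simps)
      finally have dz: "dist z a = norm ((- Ent x) *\<^sub>R v 0 + (\<Sum>i\<in>T. c i *\<^sub>R v (Suc i)))"
        using x(2) by (simp add: dist_norm)
      show ?thesis
      proof (cases "\<exists>j\<in>I. 1 / (2 * real m) \<le> \<bar>1 / real m - x j\<bar>")
        case True
        then obtain j where j: "j \<in> I" "1 / (2 * real m) \<le> \<bar>1 / real m - x j\<bar>" by blast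
        have jp: "real j \<ge> real p" using j(1) unfolding I_def by simp
        have cj: "\<bar>c j\<bar> = \<bar>1 / real m - x j\<bar> * real (Suc j)" unfolding c_def using j(1) by (simp add: abs_mult)
        have "real n \<le> (real p + 1) / (2 * real m)" unfolding p_def using mpos by (simp add: field_simps)
        also have "\<dots> \<le> real (Suc j) / (2 * real m)" using jp mpos by (simp add: divide_right_mono)
        also have "\<dots> = 1 / (2 * real m) * real (Suc j)" by simp
        also have "\<dots> \<le> \<bar>1 / real m - x j\<bar> * real (Suc j)" by (rule mult_right_mono[OF j(2)]) simp
        also have "\<dots> = \<bar>c j\<bar>" using cj by simp
        also have "\<dots> \<le> norm ((- Ent x) *\<^sub>R v 0 + (\<Sum>i\<in>T. c i *\<^sub>R v (Suc i)))"
          by (rule low_est(2)[OF Q fT]) (use j(1) IT in blast)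
        finally show ?thesis using dz by simp
      next
        case False
        have xI: "x j > 1 / (2 * real m) \<and> x j < 3 / (2 * real m)" if jI: "j \<in> I" for j
        proof -
          have a: "\<bar>1 / real m - x j\<bar> < 1 / (2 * real m)" using False jI by force
          have e1: "1 / real m - 1 / (2 * real m) = 1 / (2 * real m)" using mpos by (simp add: field_simps)
          have e2: "1 / real m + 1 / (2 * real m) = 3 / (2 * real m)" using mpos by (simp add: field_simps)
          show ?thesis using a e1 e2 by (simp add: abs_less_iff)
        qed
        have hpos: "1 / (2 * real m) > 0" using mpos by simp
        have Isx: "I \<subseteq> supp x"
        proof
          fix j assume "j \<in> I"
          then have "x j > 1 / (2 * real m)" using xI by blast
          then have "x j \<noteq> 0" using hpos by linarith
          then show "j \<in> supp x" by (simp add: supp_def)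
        qed
        have xle1: "x i \<le> 1" for i
        proof (cases "i \<in> supp x")
          case True
          then have "x i \<le> sum x (supp x)" using fsx x0 by (intro member_le_sum) auto
          then show ?thesis using sx1 by simp
        next
          case False then show ?thesis by (simp add: supp_def)
        qed
        have tnn: "0 \<le> - (x i * ln (x i))" for i
        proof (cases "x i = 0")
          case True then show ?thesis by simp
        next
          case False
          then have "x i > 0" using x0[rule_format, of i] by linarith
          then have "ln (x i) \<le> 0" using xle1 by simp
          then show ?thesis using x0 by (simp add: mult_nonneg_nonpos)
        qed
        define L where "L = ln (2 * real m / 3)"
        have L2n: "L \<ge> 2 * real n"
        proof -
          have "exp (2 * real n) \<le> 2 * real m / 3" using mge by simp
          then have "ln (exp (2 * real n)) \<le> L" unfolding L_def using mpos by (subst ln_le_cancel_iff) auto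
          then show ?thesis by simp
        qed
        have L0: "L \<ge> 0" using L2n by simp
        have termI: "1 / (2 * real m) * L \<le> - (x i * ln (x i))" if iI: "i \<in> I" for i
        proof -
          have xi: "x i > 1 / (2 * real m)" "x i < 3 / (2 * real m)" using xI[OF iI] by auto
          have xpos: "x i > 0" using xi(1) hpos by linarith
          have "2 * real m / 3 < 1 / x i" using xi(2) xpos mpos by (simp add: field_simps)
          then have "L \<le> ln (1 / x i)" unfolding L_def using mpos xpos by (subst ln_le_cancel_iff) auto
          also have "ln (1 / x i) = - ln (x i)" using xpos by (simp add: ln_div)
          finally have "L \<le> - ln (x i)" .
          then have "1 / (2 * real m) * L \<le> x i * (- ln (x i))"
            using xi(1) L0 xpos by (intro mult_mono) auto
          then show ?thesis by simp
        qed
        have "real n \<le> real m * (1 / (2 * real m) * L)" using mpos L2n by (simp add: field_simps)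
        also have "\<dots> = (\<Sum>i\<in>I. 1 / (2 * real m) * L)" using cardI by simp
        also have "\<dots> \<le> (\<Sum>i\<in>I. - (x i * ln (x i)))" using termI by (rule sum_mono)
        also have "\<dots> \<le> (\<Sum>i\<in>supp x. - (x i * ln (x i)))" using fsx Isx tnn by (intro sum_mono2) auto
        also have "\<dots> = Ent x" unfolding Ent_def ..
        also have "\<dots> \<le> \<bar>- Ent x\<bar>" by simp
        also have "\<dots> \<le> norm ((- Ent x) *\<^sub>R v 0 + (\<Sum>i\<in>T. c i *\<^sub>R v (Suc i)))"
          by (rule low_est(1)[OF Q fT])
        finally show ?thesis using dz by simp
      qed
    qed
    then have "real n \<le> infdist z A" by (rule infdist_ge_all[OF Ane])
    then show ?thesis using zH by blast
  qed
  have "(SUP y\<in>convex hull A. ereal (infdist y A)) = \<infinity>"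
    by (rule SUP_PInfty) (use far in auto)
  then have "hausdorff_ext A (convex hull A) = \<infinity>" unfolding hausdorff_ext_def by simp
  then show ?thesis using Ane ac by blast
qed

end
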